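(* Let $A$ be a circular $m\times n$ matrix, $b\in\mathbb{Z}_+^m$, $x^*\in Q(A,b)\setminus Q^*(A,b)$, and let $\Gamma$ be a circuit with negative cost in $D(A,x^* )$. Then $p(\Gamma)>0$.
   Context: Notation: $[n]=\{1,\dots,n\}$ with addition mod $n$ (index $0$ identified with $n$); for $a,c\in[n]$ with $t\ge0$ minimal such that $a+t\equiv c\pmod n$, $[a,c)_n=\{a,\dots,a+t-1\}$ (mod $n$). An $m\times n$ $\{0,1\}$-matrix $A$ is circular if for each row $i$ there are $\ell_i\in[n]$ and an integer $2\le k_i\le n-1$ with row $i$ the incidence vector of $[\ell_i,\ell_i+k_i)_n$. $Q(A,b)=\{x\ge0:Ax\ge b\}$, $Q^*(A,b)=\operatorname{conv}(Q(A,b)\cap\mathbb{Z}^n)$. $D(A)$: node set $[n]$ (labels mod $n$); forward arcs $a_i=(\ell_i-1,\ell_i+k_i-1)$ ($i\in[m]$, length $k_i$), $a_{m+j}=(j-1,j)$ ($j\in[n]$, length $1$); reverse arcs $\bar a_i=(\ell_i+k_i-1,\ell_i-1)$ (length $-k_i$), $\bar a_{m+j}=(j,j-1)$ (length $-1$). A circuit is a simple directed circuit; winding number $p(\Gamma)$: $p(\Gamma)n=\sum_{a\in E(\Gamma)}l(a)$. Costs: $\tilde A=\binom{A}{I}$, $d=\binom{b}{0}$, $v$ = last column of $\tilde A$; for $x^*\in Q(A,b)$: $s^*=\tilde Ax^*-d$, $\mu=\lceil\mathbf{1}^Tx^*\rceil-\mathbf{1}^Tx^*$, $c^+(x^* )=\mu(s^*-(1-\mu)v)$,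 $c^-(x^* )=(1-\mu)(s^*+\mu v)$. In $D(A,x^* )$ arc $a_k$ ($k\in[m+n]$) has cost $c^+_k(x^* )$ and $\bar a_k$ has cost $c^-_k(x^* )$; the cost of a circuit is the sum of its arc costs. *)

theory Defs
  imports Complex_Main
begin

text \<open>Columns and rows are 1-indexed: columns j in {1..n}, rows i in {1..m}.
  Nodes of D(A) are labels mod n, represented by {0..<n} (label n is node 0).\<close>

definition cint :: "nat \<Rightarrow> nat \<Rightarrow> nat \<Rightarrow> nat set" where
  "cint n a t = {((a - 1 + s) mod n) + 1 | s. s < t}"

definition circular_with ::
  "nat \<Rightarrow> nat \<Rightarrow> (nat \<Rightarrow> nat \<Rightarrow> real) \<Rightarrow> (nat \<Rightarrow> nat) \<Rightarrow> (nat \<Rightarrow> nat) \<Rightarrow> bool" where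
  "circular_with m n A l k \<longleftrightarrow>
     (\<forall>i\<in>{1..m}. l i \<in> {1..n} \<and> 2 \<le> k i \<and> k i \<le> n - 1 \<and>
        (\<forall>j\<in>{1..n}. A i j = (if j \<in> cint n (l i) (k i) then 1 else 0)))"

definition inQ :: "nat \<Rightarrow> nat \<Rightarrow> (nat \<Rightarrow> nat \<Rightarrow> real) \<Rightarrow> (nat \<Rightarrow> int) \<Rightarrow> (nat \<Rightarrow> real) \<Rightarrow> bool" where
  "inQ m n A b x \<longleftrightarrow> (\<forall>j\<in>{1..n}. 0 \<le> x j) \<and>
     (\<forall>i\<in>{1..m}. (\<Sum>j=1..n. A i j * x j) \<ge> of_int (b i))"

definition inQstar :: "nat \<Rightarrow> nat \<Rightarrow> (nat \<Rightarrow> nat \<Rightarrow> real) \<Rightarrow> (nat \<Rightarrow> int) \<Rightarrow> (nat \<Rightarrow> real) \<Rightarrow> bool" where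
  "inQstar m n A b x \<longleftrightarrow>
     (\<exists>S u. finite S \<and> S \<noteq> {} \<and>
        (\<forall>y\<in>S. inQ m n A b y \<and> (\<forall>j\<in>{1..n}. y j \<in> \<int>)) \<and>
        (\<forall>y\<in>S. 0 \<le> u y) \<and> (\<Sum>y\<in>S. u y) = 1 \<and>
        (\<forall>j\<in>{1..n}. x j = (\<Sum>y\<in>S. u y * y j)))"

text \<open>Arcs of D(A): (q, True) is the forward arc a_q, (q, False) the reverse arc \<bar>a_q, q in {1..m+n}.\<close>
type_synonym arc = "nat \<times> bool"

definition valid_arc :: "nat \<Rightarrow> nat \<Rightarrow> arc \<Rightarrow> bool" where
  "valid_arc m n e \<longleftrightarrow> fst e \<in> {1..m+n}"

definition fwd_tail :: "nat \<Rightarrow> nat \<Rightarrow> (nat \<Rightarrow> nat) \<Rightarrow> (nat \<Rightarrow> nat) \<Rightarrow> nat \<Rightarrow> nat" where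
  "fwd_tail m n l k q = (if q \<le> m then (l q - 1) mod n else (q - m - 1) mod n)"

definition fwd_head :: "nat \<Rightarrow> nat \<Rightarrow> (nat \<Rightarrow> nat) \<Rightarrow> (nat \<Rightarrow> nat) \<Rightarrow> nat \<Rightarrow> nat" where
  "fwd_head m n l k q = (if q \<le> m then (l q + k q - 1) mod n else (q - m) mod n)"

definition arc_tail :: "nat \<Rightarrow> nat \<Rightarrow> (nat \<Rightarrow> nat) \<Rightarrow> (nat \<Rightarrow> nat) \<Rightarrow> arc \<Rightarrow> nat" where
  "arc_tail m n l k e = (if snd e then fwd_tail m n l k (fst e) else fwd_head m n l k (fst e))"

definition arc_head :: "nat \<Rightarrow> nat \<Rightarrow> (nat \<Rightarrow> nat) \<Rightarrow> (nat \<Rightarrow> nat) \<Rightarrow> arc \<Rightarrow> nat" where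
  "arc_head m n l k e = (if snd e then fwd_head m n l k (fst e) else fwd_tail m n l k (fst e))"

definition arc_len :: "nat \<Rightarrow> (nat \<Rightarrow> nat) \<Rightarrow> arc \<Rightarrow> int" where
  "arc_len m k e = (let L = (if fst e \<le> m then int (k (fst e)) else 1) in if snd e then L else - L)"

definition is_circuit :: "nat \<Rightarrow> nat \<Rightarrow> (nat \<Rightarrow> nat) \<Rightarrow> (nat \<Rightarrow> nat) \<Rightarrow> arc list \<Rightarrow> bool" where
  "is_circuit m n l k C \<longleftrightarrow> C \<noteq> [] \<and> (\<forall>e\<in>set C. valid_arc m n e) \<and>
     distinct (map (arc_tail m n l k) C) \<and>
     (\<forall>i<length C. arc_head m n l k (C ! i) = arc_tail m n l k (C ! ((i + 1) mod length C)))"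

definition winding :: "nat \<Rightarrow> nat \<Rightarrow> (nat \<Rightarrow> nat) \<Rightarrow> arc list \<Rightarrow> real" where
  "winding m n k C = real_of_int (\<Sum>e\<leftarrow>C. arc_len m k e) / real n"

text \<open>Data of the stacked system  (A;I) x >= (b;0), indices q in {1..m+n}.\<close>
definition vvec :: "nat \<Rightarrow> nat \<Rightarrow> (nat \<Rightarrow> nat \<Rightarrow> real) \<Rightarrow> nat \<Rightarrow> real" where
  "vvec m n A q = (if q \<le> m then A q n else if q - m = n then 1 else 0)"

definition slack :: "nat \<Rightarrow> nat \<Rightarrow> (nat \<Rightarrow> nat \<Rightarrow> real) \<Rightarrow> (nat \<Rightarrow> int) \<Rightarrow> (nat \<Rightarrow> real) \<Rightarrow> nat \<Rightarrow> real" where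
  "slack m n A b x q = (if q \<le> m then (\<Sum>j=1..n. A q j * x j) - of_int (b q) else x (q - m))"

definition mu :: "nat \<Rightarrow> (nat \<Rightarrow> real) \<Rightarrow> real" where
  "mu n x = of_int \<lceil>\<Sum>j=1..n. x j\<rceil> - (\<Sum>j=1..n. x j)"

definition cplus :: "nat \<Rightarrow> nat \<Rightarrow> (nat \<Rightarrow> nat \<Rightarrow> real) \<Rightarrow> (nat \<Rightarrow> int) \<Rightarrow> (nat \<Rightarrow> real) \<Rightarrow> nat \<Rightarrow> real" where
  "cplus m n A b x q = mu n x * (slack m n A b x q - (1 - mu n x) * vvec m n A q)"

definition cminus :: "nat \<Rightarrow> nat \<Rightarrow> (nat \<Rightarrow> nat \<Rightarrow> real) \<Rightarrow> (nat \<Rightarrow> int) \<Rightarrow> (nat \<Rightarrow> real) \<Rightarrow> nat \<Rightarrow> real" where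
  "cminus m n A b x q = (1 - mu n x) * (slack m n A b x q + mu n x * vvec m n A q)"

definition arc_cost :: "nat \<Rightarrow> nat \<Rightarrow> (nat \<Rightarrow> nat \<Rightarrow> real) \<Rightarrow> (nat \<Rightarrow> int) \<Rightarrow> (nat \<Rightarrow> real) \<Rightarrow> arc \<Rightarrow> real" where
  "arc_cost m n A b x e = (if snd e then cplus m n A b x (fst e) else cminus m n A b x (fst e))"

definition circuit_cost :: "nat \<Rightarrow> nat \<Rightarrow> (nat \<Rightarrow> nat \<Rightarrow> real) \<Rightarrow> (nat \<Rightarrow> int) \<Rightarrow> (nat \<Rightarrow> real) \<Rightarrow> arc list \<Rightarrow> real" where
  "circuit_cost m n A b x C = (\<Sum>e\<leftarrow>C. arc_cost m n A b x e)"

end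

theory Submission
  imports Defs
begin

definition wr :: "nat \<Rightarrow> nat \<Rightarrow> (nat \<Rightarrow> nat) \<Rightarrow> (nat \<Rightarrow> nat) \<Rightarrow> nat \<Rightarrow> int" where
  "wr m n l k q = (if q \<le> m then (if l q + k q - 1 \<ge> n then 1 else 0) else if q - m = n then 1 else 0)"

definition sg :: "arc \<Rightarrow> int" where "sg e = (if snd e then 1 else -1)"

lemma cint_n:
  assumes "l \<in> {1..n}" "kk \<le> n - 1"
  shows "n \<in> cint n l kk \<longleftrightarrow> l + kk - 1 \<ge> n"
proof
  assume "n \<in> cint n l kk"
  then obtain s where s: "s < kk" "n = ((l - 1 + s) mod n) + 1" unfolding cint_def by auto
  show "l + kk - 1 \<ge> n"
  proof (rule ccontr)
    assume nn: "\<not> l + kk - 1 \<ge> n"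
    hence "l - 1 + s < n" using s assms by auto
    hence "(l - 1 + s) mod n = l - 1 + s" by simp
    with s show False using nn assms by auto
  qed
next
  assume h: "l + kk - 1 \<ge> n"
  have "n - l < kk" using h assms by auto
  moreover have "n = ((l - 1 + (n - l)) mod n) + 1" using assms by auto
  ultimately show "n \<in> cint n l kk" unfolding cint_def by blast
qed

lemma vvec_wr:
  assumes "circular_with m n A l k" "q \<in> {1..m+n}"
  shows "vvec m n A q = of_int (wr m n l k q)"
proof (cases "q \<le> m")
  case True
  then have q: "q \<in> {1..m}" using assms by auto
  have h: "l q \<in> {1..n}" "2 \<le> k q" "k q \<le> n - 1" "\<forall>j\<in>{1..n}. A q j = (if j \<in> cint n (l q) (k q) then 1 else 0)"
    using assms(1) q unfolding circular_with_def by auto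
  have "n \<in> {1..n}" using h by auto
  then have "A q n = (if n \<in> cint n (l q) (k q) then 1 else 0)" using h(4) by blast
  then show ?thesis using cint_n[OF h(1) h(3)] True unfolding vvec_def wr_def by auto
next
  case False
  then show ?thesis unfolding vvec_def wr_def by auto
qed

lemma len_fwd:
  assumes "circular_with m n A l k" "q \<in> {1..m+n}"
  shows "(if q \<le> m then int (k q) else 1) =
    int (fwd_head m n l k q) - int (fwd_tail m n l k q) + int n * wr m n l k q"
proof (cases "q \<le> m")
  case True
  then have q: "q \<in> {1..m}" using assms by auto
  have h: "l q \<in> {1..n}" "2 \<le> k q" "k q \<le> n - 1"
    using assms(1) q unfolding circular_with_def by auto
  have t: "fwd_tail m n l k q = l q - 1" using True h unfolding fwd_tail_def by auto
  show ?thesis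
  proof (cases "l q + k q - 1 \<ge> n")
    case c: True
    have "(l q + k q - 1) mod n = l q + k q - 1 - n"
    proof -
      have "l q + k q - 1 - n < n" using c h by auto
      then have "(l q + k q - 1 - n) mod n = l q + k q - 1 - n" by simp
      moreover have "(l q + k q - 1) mod n = (l q + k q - 1 - n) mod n" using c by (simp add: le_mod_geq)
      ultimately show ?thesis by simp
    qed
    then show ?thesis using True t c h unfolding fwd_head_def wr_def by auto
  next
    case c: False
    have "(l q + k q - 1) mod n = l q + k q - 1" using c by auto
    then show ?thesis using True t c h unfolding fwd_head_def wr_def by auto
  qed
next
  case False
  then have j: "q - m \<in> {1..n}" using assms by auto
  have t: "fwd_tail m n l k q = q - m - 1" using False j unfolding fwd_tail_def by auto
  show ?thesis
  proof (cases "q - m = n")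
    case True
    then show ?thesis using False t j unfolding fwd_head_def wr_def by auto
  next
    case c: False
    then have "(q - m) mod n = q - m" using j by auto
    then show ?thesis using False t j c unfolding fwd_head_def wr_def by auto
  qed
qed

lemma len_arc:
  assumes "circular_with m n A l k" "valid_arc m n e"
  shows "arc_len m k e = int (arc_head m n l k e) - int (arc_tail m n l k e)
     + int n * (sg e * wr m n l k (fst e))"
  using len_fwd[OF assms(1), of "fst e"] assms(2)
  unfolding arc_len_def arc_head_def arc_tail_def sg_def valid_arc_def Let_def
  by (auto simp: algebra_simps)

lemma telescope:
  assumes "C \<noteq> []" "\<forall>i<length C. h (C ! i) = t (C ! ((i + 1) mod length C))"
  shows "(\<Sum>e\<leftarrow>C. (int (h e) - int (t e))) = 0"
proof -
  let ?L = "length C"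
  have L: "?L > 0" using assms by auto
  have "(\<Sum>e\<leftarrow>C. (int (h e) - int (t e))) = (\<Sum>i<?L. int (h (C!i)) - int (t (C!i)))"
    by (simp add: sum_list_sum_nth atLeast0LessThan)
  also have "\<dots> = (\<Sum>i<?L. int (t (C!((i+1) mod ?L)))) - (\<Sum>i<?L. int (t (C!i)))"
    using assms(2) by (simp add: sum_subtractf)
  also have "(\<Sum>i<?L. int (t (C!((i+1) mod ?L)))) = (\<Sum>i<?L. int (t (C!i)))"
  proof (rule sum.reindex_bij_witness[where i = "\<lambda>i. (i + ?L - 1) mod ?L" and j = "\<lambda>i. (i+1) mod ?L"])
    fix a assume a: "a \<in> {..<?L}"
    show "(a + ?L - 1) mod ?L \<in> {..<?L}" using L by auto
    show "(a + 1) mod ?L \<in> {..<?L}" using L by auto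
    show "int (t (C ! ((a + 1) mod ?L))) = int (t (C ! ((a+1) mod ?L)))" by simp
    show "((a + ?L - 1) mod ?L + 1) mod ?L = a"
    proof -
      have "((a + ?L - 1) mod ?L + 1) mod ?L = (a + ?L - 1 + 1) mod ?L" by (simp add: mod_Suc_eq)
      also have "\<dots> = (a + ?L) mod ?L" using L by simp
      also have "\<dots> = a" using a by simp
      finally show ?thesis .
    qed
    show "((a + 1) mod ?L + ?L - 1) mod ?L = a"
    proof -
      have "((a + 1) mod ?L + ?L - 1) mod ?L = ((a + 1) mod ?L + (?L - 1)) mod ?L" using L by (subst Nat.add_diff_assoc) (auto simp: Suc_le_eq)
      also have "\<dots> = (a + 1 + (?L - 1)) mod ?L" by (simp add: mod_add_left_eq)
      also have "a + 1 + (?L - 1) = a + ?L" using L by simp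
      also have "(a + ?L) mod ?L = a" using a by simp
      finally show ?thesis .
    qed
  qed
  finally show ?thesis by simp
qed

lemma cost_arc:
  assumes "circular_with m n A l k" "inQ m n A b x" "valid_arc m n e"
  shows "arc_cost m n A b x e \<ge> - (mu n x * (1 - mu n x)) * (of_int (sg e * wr m n l k (fst e)))"
proof -
  let ?q = "fst e"
  have q: "?q \<in> {1..m+n}" using assms(3) unfolding valid_arc_def by auto
  have s: "slack m n A b x ?q \<ge> 0"
  proof (cases "?q \<le> m")
    case True
    then show ?thesis using assms(2) q unfolding inQ_def slack_def by auto
  next
    case False
    then have "?q - m \<in> {1..n}" using q by auto
    then show ?thesis using assms(2) False unfolding inQ_def slack_def by auto
  qed
  have mu: "0 \<le> mu n x" "mu n x < 1" unfolding mu_def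
    by (simp_all add: ceiling_correct) (linarith)
  have v: "vvec m n A ?q = of_int (wr m n l k ?q)" using vvec_wr[OF assms(1) q] .
  show ?thesis
  proof (cases "snd e")
    case True
    have "mu n x * slack m n A b x ?q \<ge> 0" using mu s by simp
    then show ?thesis using True v unfolding arc_cost_def cplus_def sg_def
      by (simp add: algebra_simps)
  next
    case False
    have "(1 - mu n x) * slack m n A b x ?q \<ge> 0" using mu s by simp
    then show ?thesis using False v unfolding arc_cost_def cminus_def sg_def
      by (simp add: algebra_simps)
  qed
qed

theorem lemma4p3:
  fixes m n :: nat and A :: "nat \<Rightarrow> nat \<Rightarrow> real" and l k :: "nat \<Rightarrow> nat"
    and b :: "nat \<Rightarrow> int" and x :: "nat \<Rightarrow> real" and C :: "arc list"
  assumes "circular_with m n A l k"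
    and "\<forall>i\<in>{1..m}. 0 \<le> b i"
    and "inQ m n A b x" and "\<not> inQstar m n A b x"
    and "is_circuit m n l k C"
    and "circuit_cost m n A b x C < 0"
  shows "winding m n k C > 0"
proof (rule ccontr)
  assume neg: "\<not> ?thesis"
  let ?W = "\<Sum>e\<leftarrow>C. sg e * wr m n l k (fst e)"
  let ?c = "mu n x * (1 - mu n x)"
  have circ: "C \<noteq> []" "\<forall>e\<in>set C. valid_arc m n e"
    "\<forall>i<length C. arc_head m n l k (C ! i) = arc_tail m n l k (C ! ((i + 1) mod length C))"
    using assms(5) unfolding is_circuit_def by auto
  have npos: "n > 0"
  proof -
    obtain e where "e \<in> set C" using circ(1) by (cases C) auto
    then have "fst e \<in> {1..m+n}" using circ(2) unfolding valid_arc_def by auto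
    show ?thesis
    proof (rule ccontr)
      assume "\<not> n > 0"
      then have "n = 0" by simp
      then have "fst e \<le> m" using \<open>fst e \<in> {1..m+n}\<close> by auto
      then have "fst e \<in> {1..m}" using \<open>fst e \<in> {1..m+n}\<close> by auto
      then show False using assms(1) \<open>n = 0\<close> unfolding circular_with_def by fastforce
    qed
  qed
  have "(\<Sum>e\<leftarrow>C. arc_len m k e) = (\<Sum>e\<leftarrow>C. (int (arc_head m n l k e) - int (arc_tail m n l k e))
     + int n * (sg e * wr m n l k (fst e)))"
    using len_arc[OF assms(1)] circ(2) by (intro arg_cong[where f=sum_list] map_cong) auto
  also have "\<dots> = (\<Sum>e\<leftarrow>C. (int (arc_head m n l k e) - int (arc_tail m n l k e)))
     + int n * ?W" by (simp add: sum_list_addf sum_list_const_mult)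
  also have "(\<Sum>e\<leftarrow>C. (int (arc_head m n l k e) - int (arc_tail m n l k e))) = 0"
    using telescope[OF circ(1) circ(3)] .
  finally have lenW: "(\<Sum>e\<leftarrow>C. arc_len m k e) = int n * ?W" by simp
  have "winding m n k C = of_int ?W" using lenW npos unfolding winding_def by simp
  then have W: "?W \<le> 0" using neg by simp
  have mu: "0 \<le> mu n x" "mu n x < 1" unfolding mu_def
    by (simp_all add: ceiling_correct) (linarith)
  have c: "?c \<ge> 0" using mu by simp
  have "circuit_cost m n A b x C \<ge> (\<Sum>e\<leftarrow>C. - ?c * of_int (sg e * wr m n l k (fst e)))"
    unfolding circuit_cost_def
    using cost_arc[OF assms(1) assms(3)] circ(2) by (intro sum_list_mono) auto
  also have "(\<Sum>e\<leftarrow>C. - ?c * of_int (sg e * wr m n l k (fst e))) = - ?c * of_int ?W"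
    by (induction C) (auto simp: algebra_simps)
  finally have "circuit_cost m n A b x C \<ge> - ?c * of_int ?W" .
  moreover have "- ?c * of_int ?W \<ge> 0" using c W by (simp add: mult_nonneg_nonpos)
  ultimately show False using assms(6) by simp
qed

end
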